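(* If $X$ is a Banach space such that $X$ or $X^*$ has property $(\alpha)$, then $X$ satisfies property $(A_d)$ for every integer $d\ge2$.
   Context: Let $(r_i)$ be independent Rademacher variables on $(\Omega_0,\mathbb{P})$; $\mathrm{Rad}(Z)$ is the closure in $L^2(\Omega_0;Z)$ of finite sums $\sum r_i\otimes z_i$. Property $(\alpha)$: there is $C$ with $\|\sum_{i,j\le n}a_{ij}r_i\otimes r_j\otimes x_{ij}\|_{\mathrm{Rad}(\mathrm{Rad}(X))}\le C\sup|a_{ij}|\,\|\sum_{i,j\le n}r_i\otimes r_j\otimes x_{ij}\|_{\mathrm{Rad}(\mathrm{Rad}(X))}$ for all $n$, complex $a_{ij}$ and $x_{ij}\in X$. For a finite family $(x_{i_1,\ldots,i_d})$ in $Z$, $N_d([x_{i_1,\ldots,i_d}])=\left(\int_{\Omega_0^d}\|\sum r_{i_1}(t_1)\cdots r_{i_d}(t_d)x_{i_1,\ldots,i_d}\|^2d\mathbb{P}^d\right)^{1/2}$. $X$ has property $(A_d)$ if there is $C>0$ with $|\sum a_{i_1,\ldots,i_d}\langle x^*_{i_1,\ldots,i_d},x_{i_1,\ldots,i_d}\rangle|\le C\sup|a_{i_1,\ldots,i_d}|\,N_d([x_{i_1,\ldots,i_d}])\,N_d([x^*_{i_1,\ldots,i_d}])$ for all finite families of scalars, $x_{i_1,\ldots,i_d}\in X$, $x^*_{i_1,\ldots,i_d}\in X^*$. *)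

theory Defs
  imports "HOL-Analysis.Analysis"
begin

text \<open>A complex Banach space X is a real Banach space (type 'a) together with the
  operator J = multiplication by i.  The norm must be compatible with complex scalars,
  i.e. norm (exp(i t) x) = norm x.\<close>

definition complex_structure :: "('a::real_normed_vector \<Rightarrow> 'a) \<Rightarrow> bool" where
  "complex_structure J \<longleftrightarrow> linear J \<and> (\<forall>x. J (J x) = - x) \<and>
     (\<forall>t x. norm (cos t *\<^sub>R x + sin t *\<^sub>R J x) = norm x)"

definition scC :: "('a::real_vector \<Rightarrow> 'a) \<Rightarrow> complex \<Rightarrow> 'a \<Rightarrow> 'a" where
  "scC J c x = Re c *\<^sub>R x + Im c *\<^sub>R J x"

text \<open>The complex dual X* is identified (isometrically, as a real Banach space) with the
  real dual 'a \<Rightarrow>L real via f \<mapsto> Re o f.  Multiplication by i on X* becomes g \<mapsto> g o J,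
  and the complex duality pairing is  f(x) = g x - i g(J x).\<close>
definition dualJ :: "('a::real_normed_vector \<Rightarrow> 'a) \<Rightarrow> ('a \<Rightarrow>\<^sub>L real) \<Rightarrow> ('a \<Rightarrow>\<^sub>L real)" where
  "dualJ J g = Blinfun (\<lambda>x. g (J x))"

definition cpair :: "('a::real_normed_vector \<Rightarrow> 'a) \<Rightarrow> ('a \<Rightarrow>\<^sub>L real) \<Rightarrow> 'a \<Rightarrow> complex" where
  "cpair J g x = Complex (g x) (- g (J x))"

definition idx :: "nat \<Rightarrow> nat \<Rightarrow> nat list set" where
  "idx d n = {is. length is = d \<and> set is \<subseteq> {..<n}}"

text \<open>Sign patterns: the values (r_i(t_k))_{k<d, i<n}; the random vector is uniformly
  distributed on this finite set.\<close>
definition signs :: "nat \<Rightarrow> nat \<Rightarrow> (nat \<Rightarrow> nat \<Rightarrow> real) set" where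
  "signs d n = PiE {..<d} (\<lambda>_. PiE {..<n} (\<lambda>_. {-1, 1}))"

text \<open>N_d of the family (x_is)_{is \<in> idx d n}: the L^2(\<Omega>_0^d) norm of
  \<Sum> r_{i_1}(t_1)...r_{i_d}(t_d) x_{i_1...i_d}, computed as the exact finite average.\<close>
definition Nd :: "nat \<Rightarrow> nat \<Rightarrow> (nat list \<Rightarrow> 'a::real_normed_vector) \<Rightarrow> real" where
  "Nd d n x = sqrt ((\<Sum>\<epsilon>\<in>signs d n.
       (norm (\<Sum>is\<in>idx d n. (\<Prod>k<d. \<epsilon> k (is ! k)) *\<^sub>R x is))\<^sup>2) / real (card (signs d n)))"

text \<open>Property (alpha) for a complex normed space with complex scalar multiplication sc.
  The Rad(Rad(Z)) norm of \<Sum> r_i \<otimes> r_j \<otimes> x_ij equals N_2([x_ij]).\<close>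
definition property_alpha :: "(complex \<Rightarrow> 'b::real_normed_vector \<Rightarrow> 'b) \<Rightarrow> bool" where
  "property_alpha sc \<longleftrightarrow> (\<exists>C. \<forall>n (a :: nat list \<Rightarrow> complex) (x :: nat list \<Rightarrow> 'b).
      Nd 2 n (\<lambda>is. sc (a is) (x is)) \<le> C * (MAX is\<in>idx 2 n. cmod (a is)) * Nd 2 n x)"

definition property_A :: "('a::real_normed_vector \<Rightarrow> 'a) \<Rightarrow> nat \<Rightarrow> bool" where
  "property_A J d \<longleftrightarrow> (\<exists>C>0. \<forall>n (a :: nat list \<Rightarrow> complex) (x :: nat list \<Rightarrow> 'a) (xs :: nat list \<Rightarrow> ('a \<Rightarrow>\<^sub>L real)).
      cmod (\<Sum>is\<in>idx d n. a is * cpair J (xs is) (x is))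
        \<le> C * (MAX is\<in>idx d n. cmod (a is)) * Nd d n x * Nd d n xs)"

end

theory Submission
  imports Defs
begin


definition avg :: "'a set \<Rightarrow> ('a \<Rightarrow> real) \<Rightarrow> real" where
  "avg S f = (\<Sum>s\<in>S. f s) / real (card S)"

lemma avg_cong: "(\<And>s. s \<in> S \<Longrightarrow> f s = g s) \<Longrightarrow> avg S f = avg S g"
  unfolding avg_def by (metis sum.cong)

lemma avg_mono: "(\<And>s. s \<in> S \<Longrightarrow> f s \<le> g s) \<Longrightarrow> avg S f \<le> avg S g"
  unfolding avg_def by (intro divide_right_mono sum_mono) auto

lemma avg_nonneg: "(\<And>s. s \<in> S \<Longrightarrow> 0 \<le> f s) \<Longrightarrow> 0 \<le> avg S f"
  unfolding avg_def by (intro divide_nonneg_nonneg sum_nonneg) auto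

lemma avg_cmult: "avg S (\<lambda>s. c * f s) = c * avg S f"
  unfolding avg_def by (simp add: sum_distrib_left)

lemma avg_const: "finite S \<Longrightarrow> S \<noteq> {} \<Longrightarrow> avg S (\<lambda>_. c) = c"
  unfolding avg_def by simp

lemma avg_reindex: "bij_betw h A B \<Longrightarrow> avg B f = avg A (\<lambda>a. f (h a))"
  unfolding avg_def by (simp add: sum.reindex_bij_betw bij_betw_same_card)

lemma avg_image: "inj_on h A \<Longrightarrow> avg (h ` A) f = avg A (\<lambda>a. f (h a))"
  using avg_reindex[of h A "h ` A"] by (simp add: bij_betw_imageI)

lemma avg_prod:
  assumes "finite A" "finite B"
  shows "avg (A \<times> B) f = avg A (\<lambda>a. avg B (\<lambda>b. f (a, b)))"
proof -
  have "(\<Sum>p\<in>A \<times> B. f p) = (\<Sum>a\<in>A. \<Sum>b\<in>B. f (a, b))"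
    by (simp add: sum.cartesian_product)
  then show ?thesis
    unfolding avg_def by (simp add: card_cartesian_product sum_divide_distrib[symmetric] divide_divide_eq_left mult.commute)
qed

lemma avg_swap:
  assumes "finite A" "finite B"
  shows "avg A (\<lambda>a. avg B (\<lambda>b. f a b)) = avg B (\<lambda>b. avg A (\<lambda>a. f a b))"
  unfolding avg_def
  by (simp add: sum_divide_distrib[symmetric] divide_divide_eq_left mult.commute sum.swap[of _ A B])

definition RS :: "'i set \<Rightarrow> ('i \<Rightarrow> real) set" where
  "RS I = PiE I (\<lambda>_. {-1, 1})"

lemma finite_RS: "finite I \<Longrightarrow> finite (RS I)"
  unfolding RS_def by (intro finite_PiE) auto

lemma RS_ne: "RS I \<noteq> {}"
  unfolding RS_def by (simp add: PiE_eq_empty_iff)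

lemma RS_val: "\<eta> \<in> RS I \<Longrightarrow> i \<in> I \<Longrightarrow> \<eta> i = -1 \<or> \<eta> i = 1"
  unfolding RS_def by (auto simp: PiE_iff)

lemma RS_sq: "\<eta> \<in> RS I \<Longrightarrow> i \<in> I \<Longrightarrow> \<eta> i * \<eta> i = 1"
  using RS_val by fastforce

lemma RS_abs: "\<eta> \<in> RS I \<Longrightarrow> i \<in> I \<Longrightarrow> \<bar>\<eta> i\<bar> = 1"
  using RS_val by fastforce

lemma RS_insert_bij: "b \<notin> B \<Longrightarrow> bij_betw (\<lambda>(y, g). g(b := y)) ({-1, 1} \<times> RS B) (RS (insert b B))"
  unfolding RS_def using PiE_insert_eq[of b B "\<lambda>_. {-1,1::real}"] inj_combinator[of b B "\<lambda>_. {-1,1::real}"]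
  by (simp add: bij_betw_def)

lemma avg_RS_marginal0:
  assumes "finite D" "finite A" "A \<inter> D = {}"
  shows "avg (RS (A \<union> D)) (\<lambda>e. h (restrict e A)) = avg (RS A) h"
  using assms
proof (induction D rule: finite_induct)
  case empty
  then show ?case
  proof -
    have "avg (RS A) (\<lambda>e. h (restrict e A)) = avg (RS A) h"
      by (rule avg_cong, subst PiE_restrict) (auto simp: RS_def)
    then show ?thesis by (simp only: Un_empty_right)
  qed
next
  case (insert b D)
  have bn: "b \<notin> A \<union> D" using insert by auto
  have "avg (RS (A \<union> insert b D)) (\<lambda>e. h (restrict e A))
      = avg (RS (insert b (A \<union> D))) (\<lambda>e. h (restrict e A))" by simp
  also have "\<dots> = avg ({-1, 1} \<times> RS (A \<union> D)) (\<lambda>p. h (restrict ((\<lambda>(y, g). g(b := y)) p) A))"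
    by (rule avg_reindex[OF RS_insert_bij[OF bn]])
  also have "\<dots> = avg ({-1, 1::real} \<times> RS (A \<union> D)) (\<lambda>p. h (restrict (snd p) A))"
  proof (rule avg_cong)
    fix p assume "p \<in> {-1, 1::real} \<times> RS (A \<union> D)"
    then obtain y g where p: "p = (y, g)" by fastforce
    have "restrict (g(b := y)) A = restrict g A"
      using bn by (auto simp: restrict_def fun_eq_iff)
    then show "h (restrict ((\<lambda>(y, g). g(b := y)) p) A) = h (restrict (snd p) A)"
      by (simp add: p)
  qed
  also have "\<dots> = avg {-1, 1::real} (\<lambda>y. avg (RS (A \<union> D)) (\<lambda>g. h (restrict g A)))"
    using insert by (simp add: avg_prod finite_RS)
  also have "\<dots> = avg {-1, 1::real} (\<lambda>y. avg (RS A) h)"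
  proof -
    have IH: "avg (RS (A \<union> D)) (\<lambda>g. h (restrict g A)) = avg (RS A) h"
      using insert.IH insert.prems by blast
    show ?thesis by (intro avg_cong) (rule IH)
  qed
  also have "\<dots> = avg (RS A) h"
    by (simp add: avg_const)
  finally show ?case .
qed

lemma avg_RS_marginal:
  assumes "finite B" "A \<subseteq> B"
  shows "avg (RS B) (\<lambda>e. h (restrict e A)) = avg (RS A) h"
proof -
  have "B = A \<union> (B - A)" using assms by auto
  then show ?thesis
    using avg_RS_marginal0[of "B - A" A h] assms finite_subset by fastforce
qed

lemma RS_comp_bij:
  assumes "inj_on f A"
  shows "bij_betw (\<lambda>e. restrict (e \<circ> f) A) (RS (f ` A)) (RS A)"
proof (rule bij_betwI[where g="\<lambda>\<eta>. restrict (\<eta> \<circ> the_inv_into A f) (f ` A)"])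
  show "(\<lambda>e. restrict (e \<circ> f) A) \<in> RS (f ` A) \<rightarrow> RS A"
    by (auto simp: RS_def PiE_iff)
  show "(\<lambda>\<eta>. restrict (\<eta> \<circ> the_inv_into A f) (f ` A)) \<in> RS A \<rightarrow> RS (f ` A)"
    using assms by (auto simp: RS_def PiE_iff the_inv_into_f_f)
  show "restrict (restrict (e \<circ> f) A \<circ> the_inv_into A f) (f ` A) = e" if "e \<in> RS (f ` A)" for e
    using assms that by (auto simp: RS_def PiE_iff the_inv_into_f_f extensional_def fun_eq_iff)
  show "restrict (restrict (\<eta> \<circ> the_inv_into A f) (f ` A) \<circ> f) A = \<eta>" if "\<eta> \<in> RS A" for \<eta>
    using assms that by (auto simp: RS_def PiE_iff the_inv_into_f_f extensional_def fun_eq_iff)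
qed

lemma avg_RS_comp:
  assumes "finite B" "inj_on f A" "f ` A \<subseteq> B"
  shows "avg (RS B) (\<lambda>e. h (restrict (e \<circ> f) A)) = avg (RS A) h"
proof -
  have "avg (RS B) (\<lambda>e. h (restrict (e \<circ> f) A))
      = avg (RS B) (\<lambda>e. (\<lambda>e'. h (restrict (e' \<circ> f) A)) (restrict e (f ` A)))"
    by (intro avg_cong arg_cong[where f=h]) (auto simp: fun_eq_iff)
  also have "\<dots> = avg (RS (f ` A)) (\<lambda>e'. h (restrict (e' \<circ> f) A))"
    using assms by (intro avg_RS_marginal) auto
  also have "\<dots> = avg (RS A) h"
    using avg_reindex[OF RS_comp_bij[OF assms(2)], of h] by simp
  finally show ?thesis .
qed

lemma pm1_mult: "(a::real) = -1 \<or> a = 1 \<Longrightarrow> b = -1 \<or> b = 1 \<Longrightarrow> a * b = -1 \<or> a * b = 1"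
  by auto

lemma RS_flip_bij:
  assumes "\<tau> \<in> RS K"
  shows "bij_betw (\<lambda>\<eta>. restrict (\<lambda>k. \<eta> k * \<tau> k) K) (RS K) (RS K)"
proof (rule bij_betwI[where g="\<lambda>\<eta>. restrict (\<lambda>k. \<eta> k * \<tau> k) K"])
  show "(\<lambda>\<eta>. restrict (\<lambda>k. \<eta> k * \<tau> k) K) \<in> RS K \<rightarrow> RS K"
    using assms pm1_mult by (auto simp: RS_def PiE_iff)
  then show "(\<lambda>\<eta>. restrict (\<lambda>k. \<eta> k * \<tau> k) K) \<in> RS K \<rightarrow> RS K" .
  show "restrict (\<lambda>k. restrict (\<lambda>k. \<eta> k * \<tau> k) K k * \<tau> k) K = \<eta>" if "\<eta> \<in> RS K" for \<eta>
    using assms that RS_sq[OF assms] by (auto simp: RS_def PiE_iff extensional_def fun_eq_iff mult.assoc)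
  then show "restrict (\<lambda>k. restrict (\<lambda>k. \<eta> k * \<tau> k) K k * \<tau> k) K = \<eta>" if "\<eta> \<in> RS K" for \<eta>
    using that by blast
qed



definition Indp :: "'i set \<Rightarrow> ('i \<Rightarrow> 'b::real_normed_vector) \<Rightarrow> real" where
  "Indp I u = avg (RS I) (\<lambda>\<eta>. (norm (\<Sum>i\<in>I. \<eta> i *\<^sub>R u i))\<^sup>2)"

definition T2p :: "'i set \<Rightarrow> 'j set \<Rightarrow> ('i \<Rightarrow> 'j \<Rightarrow> 'b::real_normed_vector) \<Rightarrow> real" where
  "T2p I J v = avg (RS I) (\<lambda>\<epsilon>. avg (RS J) (\<lambda>\<delta>. (norm (\<Sum>i\<in>I. \<Sum>j\<in>J. (\<epsilon> i * \<delta> j) *\<^sub>R v i j))\<^sup>2))"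

lemma Indp_cong: "(\<And>i. i \<in> I \<Longrightarrow> u i = u' i) \<Longrightarrow> Indp I u = Indp I u'"
  unfolding Indp_def by (intro avg_cong) (simp cong: sum.cong)

lemma T2p_cong: "(\<And>i j. i \<in> I \<Longrightarrow> j \<in> J \<Longrightarrow> v i j = v' i j) \<Longrightarrow> T2p I J v = T2p I J v'"
  unfolding T2p_def by (intro avg_cong) (simp cong: sum.cong)

lemma Indp_nonneg: "0 \<le> Indp I u"
  unfolding Indp_def by (intro avg_nonneg) auto

lemma T2p_nonneg: "0 \<le> T2p I J u"
  unfolding T2p_def by (intro avg_nonneg) auto

lemma Indp_flip:
  assumes "\<tau> \<in> RS K"
  shows "avg (RS K) (\<lambda>\<eta>. (norm (\<Sum>k\<in>K. (\<eta> k * \<tau> k) *\<^sub>R u k))\<^sup>2) = Indp K u"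
proof -
  have "Indp K u = avg (RS K) (\<lambda>\<eta>. (norm (\<Sum>k\<in>K. (restrict (\<lambda>k. \<eta> k * \<tau> k) K) k *\<^sub>R u k))\<^sup>2)"
    unfolding Indp_def by (rule avg_reindex[OF RS_flip_bij[OF assms]])
  also have "\<dots> = avg (RS K) (\<lambda>\<eta>. (norm (\<Sum>k\<in>K. (\<eta> k * \<tau> k) *\<^sub>R u k))\<^sup>2)"
    by (intro avg_cong) (simp cong: sum.cong)
  finally show ?thesis by simp
qed

lemma T2p_avg_flip:
  assumes I: "finite I" and J: "finite J"
  shows "avg (RS (I \<times> J)) (\<lambda>\<sigma>. T2p I J (\<lambda>i j. \<sigma> (i, j) *\<^sub>R v i j)) = Indp (I \<times> J) (\<lambda>p. v (fst p) (snd p))"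
proof -
  have fin: "finite (RS (I \<times> J))" "finite (RS I)" "finite (RS J)"
    using I J by (auto intro: finite_RS)
  have "avg (RS (I \<times> J)) (\<lambda>\<sigma>. T2p I J (\<lambda>i j. \<sigma> (i, j) *\<^sub>R v i j))
     = avg (RS I) (\<lambda>\<epsilon>. avg (RS J) (\<lambda>\<delta>. avg (RS (I \<times> J)) (\<lambda>\<sigma>.
          (norm (\<Sum>i\<in>I. \<Sum>j\<in>J. (\<epsilon> i * \<delta> j) *\<^sub>R (\<sigma> (i, j) *\<^sub>R v i j)))\<^sup>2)))"
    unfolding T2p_def using fin
    by (simp add: avg_swap[of "RS (I \<times> J)" "RS I"] avg_swap[of "RS (I \<times> J)" "RS J"])
  also have "\<dots> = avg (RS I) (\<lambda>\<epsilon>. avg (RS J) (\<lambda>\<delta>. Indp (I \<times> J) (\<lambda>p. v (fst p) (snd p))))"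
  proof (intro avg_cong)
    fix \<epsilon> \<delta> assume e: "\<epsilon> \<in> RS I" and d: "\<delta> \<in> RS J"
    define \<tau> where "\<tau> = restrict (\<lambda>p. \<epsilon> (fst p) * \<delta> (snd p)) (I \<times> J)"
    have \<tau>: "\<tau> \<in> RS (I \<times> J)"
      using e d pm1_mult unfolding \<tau>_def RS_def by (auto simp: PiE_iff)
    have "\<And>\<sigma>. (\<Sum>i\<in>I. \<Sum>j\<in>J. (\<epsilon> i * \<delta> j) *\<^sub>R (\<sigma> (i, j) *\<^sub>R v i j))
           = (\<Sum>p\<in>I \<times> J. (\<sigma> p * \<tau> p) *\<^sub>R v (fst p) (snd p))"
      unfolding \<tau>_def by (simp add: sum.cartesian_product mult.commute) (intro sum.cong, auto)
    then show "avg (RS (I \<times> J)) (\<lambda>\<sigma>. (norm (\<Sum>i\<in>I. \<Sum>j\<in>J. (\<epsilon> i * \<delta> j) *\<^sub>R (\<sigma> (i, j) *\<^sub>R v i j)))\<^sup>2)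
       = Indp (I \<times> J) (\<lambda>p. v (fst p) (snd p))"
      using Indp_flip[OF \<tau>] by simp
  qed
  also have "\<dots> = Indp (I \<times> J) (\<lambda>p. v (fst p) (snd p))"
    using fin by (simp add: avg_const RS_ne)
  finally show ?thesis .
qed

lemma E_pointwise:
  fixes v :: "'i \<Rightarrow> 'j \<Rightarrow> 'b::real_normed_vector"
  assumes I: "finite I" and J: "finite J"
    and lift: "\<And>(w :: 'i \<Rightarrow> 'j \<Rightarrow> 'b) \<sigma>. \<sigma> \<in> RS (I \<times> J) \<Longrightarrow> T2p I J (\<lambda>i j. \<sigma> (i, j) *\<^sub>R w i j) \<le> K * T2p I J w"
  shows "Indp (I \<times> J) (\<lambda>p. v (fst p) (snd p)) \<le> K * T2p I J v"
    and "T2p I J v \<le> K * Indp (I \<times> J) (\<lambda>p. v (fst p) (snd p))"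
proof -
  have fin: "finite (RS (I \<times> J))" using I J by (auto intro: finite_RS)
  have "Indp (I \<times> J) (\<lambda>p. v (fst p) (snd p)) = avg (RS (I \<times> J)) (\<lambda>\<sigma>. T2p I J (\<lambda>i j. \<sigma> (i, j) *\<^sub>R v i j))"
    by (rule T2p_avg_flip[OF I J, symmetric])
  also have "\<dots> \<le> avg (RS (I \<times> J)) (\<lambda>\<sigma>. K * T2p I J v)"
    by (intro avg_mono) (rule lift)
  also have "\<dots> = K * T2p I J v"
    using fin by (simp add: avg_const RS_ne)
  finally show "Indp (I \<times> J) (\<lambda>p. v (fst p) (snd p)) \<le> K * T2p I J v" .
  have "T2p I J v = avg (RS (I \<times> J)) (\<lambda>\<sigma>. T2p I J v)"
    using fin by (simp add: avg_const RS_ne)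
  also have "\<dots> \<le> avg (RS (I \<times> J)) (\<lambda>\<sigma>. K * T2p I J (\<lambda>i j. \<sigma> (i, j) *\<^sub>R v i j))"
  proof (intro avg_mono)
    fix \<sigma> assume s: "\<sigma> \<in> RS (I \<times> J)"
    have "T2p I J v = T2p I J (\<lambda>i j. \<sigma> (i, j) *\<^sub>R ((\<lambda>i j. \<sigma> (i, j) *\<^sub>R v i j) i j))"
      using RS_sq[OF s] by (intro T2p_cong) simp
    also have "\<dots> \<le> K * T2p I J (\<lambda>i j. \<sigma> (i, j) *\<^sub>R v i j)"
      by (rule lift[OF s])
    finally show "T2p I J v \<le> K * T2p I J (\<lambda>i j. \<sigma> (i, j) *\<^sub>R v i j)" .
  qed
  also have "\<dots> = K * Indp (I \<times> J) (\<lambda>p. v (fst p) (snd p))"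
    by (simp add: avg_cmult T2p_avg_flip[OF I J])
  finally show "T2p I J v \<le> K * Indp (I \<times> J) (\<lambda>p. v (fst p) (snd p))" .
qed



lemma finite_idx: "finite (idx d n)"
proof -
  have "idx d n = {xs. set xs \<subseteq> {..<n} \<and> length xs = d}" unfolding idx_def by auto
  then show ?thesis using finite_lists_length_eq[of "{..<n}" d] by simp
qed

lemma signs_RS: "signs d n = PiE {..<d} (\<lambda>_. RS {..<n})"
  unfolding signs_def RS_def by simp

lemma prod2: "(\<Prod>k<2::nat. f k) = f 0 * f 1"
  by (simp add: numeral_2_eq_2)

lemma signs2_bij:
  "bij_betw (\<lambda>(e0, e1). restrict (\<lambda>k. if k = 0 then e0 else e1) {..<2::nat}) (RS {..<N} \<times> RS {..<N}) (signs 2 N)"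
proof (rule bij_betwI[where g="\<lambda>\<epsilon>. (\<epsilon> 0, \<epsilon> 1)"])
  show "(\<lambda>(e0, e1). restrict (\<lambda>k. if k = 0 then e0 else e1) {..<2::nat}) \<in> RS {..<N} \<times> RS {..<N} \<rightarrow> signs 2 N"
    unfolding signs_RS by (auto simp: PiE_iff)
  show "(\<lambda>\<epsilon>. (\<epsilon> 0, \<epsilon> 1)) \<in> signs 2 N \<rightarrow> RS {..<N} \<times> RS {..<N}"
    unfolding signs_RS by (auto simp: PiE_iff)
  show "(\<lambda>(e0, e1). restrict (\<lambda>k. if k = 0 then e0 else e1) {..<2::nat}) (\<epsilon> 0, \<epsilon> 1) = \<epsilon>"
    if e: "\<epsilon> \<in> signs 2 N" for \<epsilon>
  proof (rule ext)
    fix k :: nat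
    have e': "\<epsilon> \<in> PiE {..<2} (\<lambda>_. RS {..<N})" using e unfolding signs_RS .
    show "(\<lambda>(e0, e1). restrict (\<lambda>k. if k = 0 then e0 else e1) {..<2::nat}) (\<epsilon> 0, \<epsilon> 1) k = \<epsilon> k"
    proof (cases "k < 2")
      case True
      then have "k = 0 \<or> k = 1" by auto
      then show ?thesis by auto
    next
      case False
      then show ?thesis using PiE_arb[OF e'] by auto
    qed
  qed
  show "(\<lambda>\<epsilon>. (\<epsilon> 0, \<epsilon> 1)) ((\<lambda>(e0, e1). restrict (\<lambda>k. if k = 0 then e0 else e1) {..<2::nat}) p) = p" for p
    by (cases p) auto
qed

definition pidx :: "'i::countable set \<Rightarrow> 'j::countable set \<Rightarrow> nat list set" where
  "pidx I J = (\<lambda>(i, j). [to_nat i, to_nat j]) ` (I \<times> J)"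

definition padv :: "'i::countable set \<Rightarrow> 'j::countable set \<Rightarrow> ('i \<Rightarrow> 'j \<Rightarrow> 'b::zero) \<Rightarrow> nat list \<Rightarrow> 'b" where
  "padv I J v l = (if l \<in> pidx I J then v (from_nat (l ! 0)) (from_nat (l ! 1)) else 0)"

lemma inj_pair_to_nat: "inj_on (\<lambda>(i, j). [to_nat i, to_nat j]) (I \<times> J)"
  by (auto simp: inj_on_def)

lemma inj_on_to_nat: "inj_on to_nat A"
  by (metis from_nat_to_nat inj_on_inverseI)

lemma padv_at: "i \<in> I \<Longrightarrow> j \<in> J \<Longrightarrow> padv I J v [to_nat i, to_nat j] = v i j"
  unfolding padv_def pidx_def by (auto simp: image_iff)

lemma sum_padv:
  fixes v :: "'i::countable \<Rightarrow> 'j::countable \<Rightarrow> 'b::real_normed_vector"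
  assumes I: "finite I" and J: "finite J" and IN: "to_nat ` I \<subseteq> {..<N}" and JN: "to_nat ` J \<subseteq> {..<N}"
  shows "(\<Sum>l\<in>idx 2 N. (\<Prod>k<2. \<epsilon> k (l ! k)) *\<^sub>R padv I J v l)
       = (\<Sum>i\<in>I. \<Sum>j\<in>J. (\<epsilon> 0 (to_nat i) * \<epsilon> 1 (to_nat j)) *\<^sub>R v i j)"
proof -
  have sub: "pidx I J \<subseteq> idx 2 N"
    using IN JN unfolding pidx_def idx_def by (auto simp: image_subset_iff)
  have "(\<Sum>l\<in>idx 2 N. (\<Prod>k<2. \<epsilon> k (l ! k)) *\<^sub>R padv I J v l)
      = (\<Sum>l\<in>pidx I J. (\<Prod>k<2. \<epsilon> k (l ! k)) *\<^sub>R padv I J v l)"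
  proof (rule sum.mono_neutral_right[OF finite_idx sub])
    show "\<forall>l\<in>idx 2 N - pidx I J. (\<Prod>k<2. \<epsilon> k (l ! k)) *\<^sub>R padv I J v l = 0"
      by (simp add: padv_def)
  qed
  also have "\<dots> = (\<Sum>p\<in>I \<times> J. (\<Prod>k<2. \<epsilon> k ([to_nat (fst p), to_nat (snd p)] ! k)) *\<^sub>R padv I J v [to_nat (fst p), to_nat (snd p)])"
    unfolding pidx_def by (subst sum.reindex[OF inj_pair_to_nat]) (simp add: case_prod_beta)
  also have "\<dots> = (\<Sum>p\<in>I \<times> J. (\<epsilon> 0 (to_nat (fst p)) * \<epsilon> 1 (to_nat (snd p))) *\<^sub>R v (fst p) (snd p))"
    by (intro sum.cong refl) (auto simp: prod2 padv_at)
  also have "\<dots> = (\<Sum>i\<in>I. \<Sum>j\<in>J. (\<epsilon> 0 (to_nat i) * \<epsilon> 1 (to_nat j)) *\<^sub>R v i j)"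
    by (simp add: sum.cartesian_product case_prod_beta)
  finally show ?thesis .
qed

lemma Nd_sq: "(Nd d n x)\<^sup>2 = avg (signs d n) (\<lambda>\<epsilon>. (norm (\<Sum>is\<in>idx d n. (\<Prod>k<d. \<epsilon> k (is ! k)) *\<^sub>R x is))\<^sup>2)"
  unfolding Nd_def avg_def by (intro real_sqrt_pow2 divide_nonneg_nonneg sum_nonneg) auto

lemma pad_Nd:
  fixes v :: "'i::countable \<Rightarrow> 'j::countable \<Rightarrow> 'b::real_normed_vector"
  assumes I: "finite I" and J: "finite J" and IN: "to_nat ` I \<subseteq> {..<N}" and JN: "to_nat ` J \<subseteq> {..<N}"
  shows "(Nd 2 N (padv I J v))\<^sup>2 = T2p I J v"
proof -
  have finN: "finite (RS {..<N::nat})" by (simp add: finite_RS)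
  have "(Nd 2 N (padv I J v))\<^sup>2
      = avg (signs 2 N) (\<lambda>\<epsilon>. (norm (\<Sum>i\<in>I. \<Sum>j\<in>J. (\<epsilon> 0 (to_nat i) * \<epsilon> 1 (to_nat j)) *\<^sub>R v i j))\<^sup>2)"
    unfolding Nd_sq by (intro avg_cong) (simp only: sum_padv[OF assms])
  also have "\<dots> = avg (RS {..<N} \<times> RS {..<N}) (\<lambda>(e0, e1). (norm (\<Sum>i\<in>I. \<Sum>j\<in>J. (e0 (to_nat i) * e1 (to_nat j)) *\<^sub>R v i j))\<^sup>2)"
    by (subst avg_reindex[OF signs2_bij]) (intro avg_cong, auto)
  also have "\<dots> = avg (RS {..<N}) (\<lambda>e0. avg (RS {..<N}) (\<lambda>e1. (norm (\<Sum>i\<in>I. \<Sum>j\<in>J. (e0 (to_nat i) * e1 (to_nat j)) *\<^sub>R v i j))\<^sup>2))"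
    using finN by (simp add: avg_prod)
  also have "\<dots> = avg (RS {..<N}) (\<lambda>e0. avg (RS J) (\<lambda>\<delta>. (norm (\<Sum>i\<in>I. \<Sum>j\<in>J. (e0 (to_nat i) * \<delta> j) *\<^sub>R v i j))\<^sup>2))"
  proof (intro avg_cong)
    fix e0
    have "avg (RS {..<N}) (\<lambda>e1. (norm (\<Sum>i\<in>I. \<Sum>j\<in>J. (e0 (to_nat i) * e1 (to_nat j)) *\<^sub>R v i j))\<^sup>2)
       = avg (RS {..<N}) (\<lambda>e1. (\<lambda>\<delta>. (norm (\<Sum>i\<in>I. \<Sum>j\<in>J. (e0 (to_nat i) * \<delta> j) *\<^sub>R v i j))\<^sup>2) (restrict (e1 \<circ> to_nat) J))"
      by (intro avg_cong) (simp cong: sum.cong)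
    also have "\<dots> = avg (RS J) (\<lambda>\<delta>. (norm (\<Sum>i\<in>I. \<Sum>j\<in>J. (e0 (to_nat i) * \<delta> j) *\<^sub>R v i j))\<^sup>2)"
      using JN by (intro avg_RS_comp) (auto simp: inj_on_to_nat)
    finally show "avg (RS {..<N}) (\<lambda>e1. (norm (\<Sum>i\<in>I. \<Sum>j\<in>J. (e0 (to_nat i) * e1 (to_nat j)) *\<^sub>R v i j))\<^sup>2)
       = avg (RS J) (\<lambda>\<delta>. (norm (\<Sum>i\<in>I. \<Sum>j\<in>J. (e0 (to_nat i) * \<delta> j) *\<^sub>R v i j))\<^sup>2)" .
  qed
  also have "\<dots> = avg (RS {..<N}) (\<lambda>e0. (\<lambda>\<epsilon>. avg (RS J) (\<lambda>\<delta>. (norm (\<Sum>i\<in>I. \<Sum>j\<in>J. (\<epsilon> i * \<delta> j) *\<^sub>R v i j))\<^sup>2)) (restrict (e0 \<circ> to_nat) I))"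
    by (intro avg_cong) (simp cong: sum.cong)
  also have "\<dots> = T2p I J v"
    unfolding T2p_def using IN by (intro avg_RS_comp) (auto simp: inj_on_to_nat)
  finally show ?thesis .
qed

lemma alpha_lift_pointwise:
  fixes sc :: "complex \<Rightarrow> 'b::real_normed_vector \<Rightarrow> 'b"
    and v :: "'i::countable \<Rightarrow> 'j::countable \<Rightarrow> 'b"
  assumes alpha: "\<And>n (a :: nat list \<Rightarrow> complex) (x :: nat list \<Rightarrow> 'b).
      Nd 2 n (\<lambda>is. sc (a is) (x is)) \<le> C * (MAX is\<in>idx 2 n. cmod (a is)) * Nd 2 n x"
    and sc0: "\<And>w. sc 0 w = 0"
    and I: "finite I" and J: "finite J"
    and M: "\<And>i j. i \<in> I \<Longrightarrow> j \<in> J \<Longrightarrow> cmod (a i j) \<le> M" and M0: "0 \<le> M"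
  shows "T2p I J (\<lambda>i j. sc (a i j) (v i j)) \<le> C\<^sup>2 * M\<^sup>2 * T2p I J v"
proof -
  define N where "N = Suc (Max (to_nat ` I \<union> to_nat ` J))"
  have fin: "finite (to_nat ` I \<union> to_nat ` J)" using I J by auto
  have IN: "to_nat ` I \<subseteq> {..<N}" and JN: "to_nat ` J \<subseteq> {..<N}"
    unfolding N_def using fin by (auto simp: less_Suc_eq_le intro: Max_ge)
  define a' where "a' = padv I J a"
  have eq: "(\<lambda>l. sc (a' l) (padv I J v l)) = padv I J (\<lambda>i j. sc (a i j) (v i j))"
    unfolding a'_def padv_def by (auto simp: fun_eq_iff sc0)
  define Mx where "Mx = (MAX is\<in>idx 2 N. cmod (a' is))"
  have ne: "idx 2 N \<noteq> {}"
  proof -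
    have "[0, 0] \<in> idx 2 N" unfolding idx_def N_def by auto
    then show ?thesis by blast
  qed
  have Mx0: "0 \<le> Mx"
  proof -
    obtain l where "l \<in> idx 2 N" using ne by blast
    then have "cmod (a' l) \<le> Mx" unfolding Mx_def using finite_idx by (intro Max_ge) auto
    then show ?thesis using norm_ge_zero order_trans by blast
  qed
  have aM: "cmod (a' l) \<le> M" for l
  proof (cases "l \<in> pidx I J")
    case True
    then obtain i j where "i \<in> I" "j \<in> J" "l = [to_nat i, to_nat j]" unfolding pidx_def by auto
    then show ?thesis using M by (simp add: a'_def padv_at)
  next
    case False
    then show ?thesis using M0 by (simp add: a'_def padv_def)
  qed
  have MxM: "Mx \<le> M"
    unfolding Mx_def using finite_idx ne aM
    by (intro Max.boundedI) auto
  have A: "Nd 2 N (\<lambda>l. sc (a' l) (padv I J v l)) \<le> C * Mx * Nd 2 N (padv I J v)"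
    unfolding Mx_def by (rule alpha)
  have "0 \<le> Nd 2 N (\<lambda>l. sc (a' l) (padv I J v l))" unfolding Nd_def
    by (intro real_sqrt_ge_zero divide_nonneg_nonneg sum_nonneg) auto
  then have "(Nd 2 N (\<lambda>l. sc (a' l) (padv I J v l)))\<^sup>2 \<le> (C * Mx * Nd 2 N (padv I J v))\<^sup>2"
    using A by (intro power_mono) auto
  also have "\<dots> = C\<^sup>2 * Mx\<^sup>2 * (Nd 2 N (padv I J v))\<^sup>2"
    by (simp add: power_mult_distrib)
  also have "\<dots> \<le> C\<^sup>2 * M\<^sup>2 * (Nd 2 N (padv I J v))\<^sup>2"
    using Mx0 MxM by (intro mult_right_mono mult_left_mono power_mono) auto
  finally show ?thesis
    unfolding eq pad_Nd[OF I J IN JN] .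
qed



definition Wal :: "nat \<Rightarrow> (nat \<Rightarrow> nat \<Rightarrow> real) \<Rightarrow> nat list \<Rightarrow> real" where
  "Wal d \<epsilon> l = (\<Prod>k<d. \<epsilon> k (l ! k))"

definition Td :: "nat \<Rightarrow> nat \<Rightarrow> 'w set \<Rightarrow> (nat list \<Rightarrow> 'w \<Rightarrow> 'b::real_normed_vector) \<Rightarrow> real" where
  "Td d n \<Omega> y = avg \<Omega> (\<lambda>\<omega>. avg (signs d n) (\<lambda>\<epsilon>. (norm (\<Sum>l\<in>idx d n. Wal d \<epsilon> l *\<^sub>R y l \<omega>))\<^sup>2))"

definition Ind :: "'w set \<Rightarrow> 'i set \<Rightarrow> ('i \<Rightarrow> 'w \<Rightarrow> 'b::real_normed_vector) \<Rightarrow> real" where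
  "Ind \<Omega> I y = avg \<Omega> (\<lambda>\<omega>. Indp I (\<lambda>i. y i \<omega>))"

lemma idx_Suc: "idx (Suc d) n = (\<lambda>(i, r). r @ [i]) ` ({..<n} \<times> idx d n)"
proof
  show "(\<lambda>(i, r). r @ [i]) ` ({..<n} \<times> idx d n) \<subseteq> idx (Suc d) n"
    by (auto simp: idx_def)
  show "idx (Suc d) n \<subseteq> (\<lambda>(i, r). r @ [i]) ` ({..<n} \<times> idx d n)"
  proof
    fix l assume l: "l \<in> idx (Suc d) n"
    then have len: "length l = Suc d" and st: "set l \<subseteq> {..<n}" by (auto simp: idx_def)
    then have ne: "l \<noteq> []" by auto
    have eq: "l = butlast l @ [last l]" using ne by simp
    have "last l \<in> set l" using ne by simp
    then have "last l < n" using st by auto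
    moreover have "butlast l \<in> idx d n"
      using len st in_set_butlastD unfolding idx_def by fastforce
    ultimately show "l \<in> (\<lambda>(i, r). r @ [i]) ` ({..<n} \<times> idx d n)"
      using eq by (intro image_eqI[where x="(last l, butlast l)"]) auto
  qed
qed

lemma inj_snoc: "inj_on (\<lambda>(i, r). r @ [i]) A"
  by (auto simp: inj_on_def)

lemma signs_Suc_bij: "bij_betw (\<lambda>(e, \<epsilon>'). \<epsilon>'(d := e)) (RS {..<n} \<times> signs d n) (signs (Suc d) n)"
proof -
  have "{..<Suc d} = insert d {..<d}" by auto
  then show ?thesis
    unfolding signs_RS
    using PiE_insert_eq[of d "{..<d}" "\<lambda>_. RS {..<n}"] inj_combinator[of d "{..<d}" "\<lambda>_. RS {..<n}"]
    by (simp add: bij_betw_def)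
qed

lemma Wal_Suc:
  assumes "length r = d"
  shows "Wal (Suc d) (\<epsilon>'(d := e)) (r @ [i]) = Wal d \<epsilon>' r * e i"
proof -
  have "(\<Prod>k<d. (\<epsilon>'(d := e)) k ((r @ [i]) ! k)) = (\<Prod>k<d. \<epsilon>' k (r ! k))"
    using assms by (intro prod.cong) (auto simp: nth_append)
  then show ?thesis
    unfolding Wal_def using assms by (simp add: nth_append)
qed

lemma sum_Suc_split:
  fixes Y :: "nat list \<Rightarrow> 'b::real_normed_vector"
  shows "(\<Sum>l\<in>idx (Suc d) n. Wal (Suc d) (\<epsilon>'(d := e)) l *\<^sub>R Y l)
       = (\<Sum>r\<in>idx d n. Wal d \<epsilon>' r *\<^sub>R (\<Sum>i<n. e i *\<^sub>R Y (r @ [i])))"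
proof -
  have "(\<Sum>l\<in>idx (Suc d) n. Wal (Suc d) (\<epsilon>'(d := e)) l *\<^sub>R Y l)
      = (\<Sum>p\<in>{..<n} \<times> idx d n. Wal (Suc d) (\<epsilon>'(d := e)) (snd p @ [fst p]) *\<^sub>R Y (snd p @ [fst p]))"
    unfolding idx_Suc by (subst sum.reindex[OF inj_snoc]) (simp add: case_prod_beta)
  also have "\<dots> = (\<Sum>p\<in>{..<n} \<times> idx d n. (Wal d \<epsilon>' (snd p) * e (fst p)) *\<^sub>R Y (snd p @ [fst p]))"
    by (intro sum.cong refl) (auto simp: Wal_Suc idx_def)
  also have "\<dots> = (\<Sum>i<n. \<Sum>r\<in>idx d n. (Wal d \<epsilon>' r * e i) *\<^sub>R Y (r @ [i]))"
    by (simp add: sum.cartesian_product case_prod_beta)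
  also have "\<dots> = (\<Sum>r\<in>idx d n. \<Sum>i<n. (Wal d \<epsilon>' r * e i) *\<^sub>R Y (r @ [i]))"
    by (rule sum.swap)
  also have "\<dots> = (\<Sum>r\<in>idx d n. Wal d \<epsilon>' r *\<^sub>R (\<Sum>i<n. e i *\<^sub>R Y (r @ [i])))"
    by (simp add: scaleR_sum_right)
  finally show ?thesis .
qed

definition Om :: "(nat \<Rightarrow> real) list set \<Rightarrow> nat \<Rightarrow> (nat \<Rightarrow> real) list set" where
  "Om \<Omega> n = (\<lambda>(\<omega>, e). e # \<omega>) ` (\<Omega> \<times> RS {..<n})"

definition zz :: "nat \<Rightarrow> (nat list \<Rightarrow> (nat \<Rightarrow> real) list \<Rightarrow> 'b::real_normed_vector) \<Rightarrow> nat list \<Rightarrow> (nat \<Rightarrow> real) list \<Rightarrow> 'b" where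
  "zz n y r \<omega>' = (\<Sum>i<n. hd \<omega>' i *\<^sub>R y (r @ [i]) (tl \<omega>'))"

lemma inj_cons: "inj_on (\<lambda>(\<omega>, e). e # \<omega>) A"
  by (auto simp: inj_on_def)

lemma finite_Om: "finite \<Omega> \<Longrightarrow> finite (Om \<Omega> n)"
  unfolding Om_def by (auto intro: finite_RS)

lemma avg_Om: "finite \<Omega> \<Longrightarrow> avg (Om \<Omega> n) F = avg \<Omega> (\<lambda>\<omega>. avg (RS {..<n}) (\<lambda>e. F (e # \<omega>)))"
  unfolding Om_def by (subst avg_image[OF inj_cons]) (simp add: avg_prod finite_RS case_prod_beta)

lemma finite_signs: "finite (signs d n)"
  unfolding signs_RS by (intro finite_PiE) (auto intro: finite_RS)

lemma Td_Suc:
  assumes "finite \<Omega>"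
  shows "Td (Suc d) n \<Omega> y = Td d n (Om \<Omega> n) (zz n y)"
proof -
  have "Td (Suc d) n \<Omega> y = avg \<Omega> (\<lambda>\<omega>. avg (RS {..<n} \<times> signs d n) (\<lambda>p.
      (norm (\<Sum>l\<in>idx (Suc d) n. Wal (Suc d) ((snd p)(d := fst p)) l *\<^sub>R y l \<omega>))\<^sup>2))"
    unfolding Td_def by (intro avg_cong) (simp add: avg_reindex[OF signs_Suc_bij] case_prod_beta)
  also have "\<dots> = avg \<Omega> (\<lambda>\<omega>. avg (RS {..<n}) (\<lambda>e. avg (signs d n) (\<lambda>\<epsilon>'.
      (norm (\<Sum>r\<in>idx d n. Wal d \<epsilon>' r *\<^sub>R (\<Sum>i<n. e i *\<^sub>R y (r @ [i]) \<omega>)))\<^sup>2)))"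
    by (intro avg_cong) (simp add: avg_prod finite_RS finite_signs sum_Suc_split)
  also have "\<dots> = Td d n (Om \<Omega> n) (zz n y)"
    unfolding Td_def avg_Om[OF assms] zz_def by simp
  finally show ?thesis .
qed

lemma Ind_Om:
  assumes "finite \<Omega>"
  shows "Ind (Om \<Omega> n) (idx d n) (zz n y) = avg \<Omega> (\<lambda>\<omega>. T2p {..<n} (idx d n) (\<lambda>i r. y (r @ [i]) \<omega>))"
proof -
  have "Ind (Om \<Omega> n) (idx d n) (zz n y) = avg \<Omega> (\<lambda>\<omega>. avg (RS {..<n}) (\<lambda>e. avg (RS (idx d n)) (\<lambda>\<eta>.
      (norm (\<Sum>r\<in>idx d n. \<eta> r *\<^sub>R (\<Sum>i<n. e i *\<^sub>R y (r @ [i]) \<omega>)))\<^sup>2)))"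
    unfolding Ind_def avg_Om[OF assms] Indp_def zz_def by simp
  also have "\<dots> = avg \<Omega> (\<lambda>\<omega>. T2p {..<n} (idx d n) (\<lambda>i r. y (r @ [i]) \<omega>))"
  proof -
    have inner_eq: "\<And>\<omega> e \<eta>. (\<Sum>r\<in>idx d n. \<eta> r *\<^sub>R (\<Sum>i<n. e i *\<^sub>R y (r @ [i]) \<omega>))
        = (\<Sum>i<n. \<Sum>r\<in>idx d n. (e i * \<eta> r) *\<^sub>R y (r @ [i]) \<omega>)"
      by (subst sum.swap) (simp add: scaleR_sum_right mult.commute)
    show ?thesis unfolding T2p_def by (simp only: inner_eq)
  qed
  finally show ?thesis .
qed

lemma Indp_image:
  assumes "inj_on f A"
  shows "Indp (f ` A) u = Indp A (\<lambda>a. u (f a))"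
proof -
  have "Indp A (\<lambda>a. u (f a)) = avg (RS (f ` A)) (\<lambda>e. (norm (\<Sum>a\<in>A. (restrict (e \<circ> f) A) a *\<^sub>R u (f a)))\<^sup>2)"
    unfolding Indp_def by (rule avg_reindex[OF RS_comp_bij[OF assms]])
  also have "\<dots> = avg (RS (f ` A)) (\<lambda>e. (norm (\<Sum>x\<in>f ` A. e x *\<^sub>R u x))\<^sup>2)"
    by (intro avg_cong) (simp add: sum.reindex[OF assms])
  finally show ?thesis unfolding Indp_def by simp
qed

lemma Indp_Suc: "Indp (idx (Suc d) n) u = Indp ({..<n} \<times> idx d n) (\<lambda>p. u (snd p @ [fst p]))"
  unfolding idx_Suc by (subst Indp_image[OF inj_snoc]) (simp add: case_prod_beta)



lemma idx0: "idx 0 n = {[]}"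
  unfolding idx_def by auto

lemma signs0: "signs 0 n = {\<lambda>_. undefined}"
  unfolding signs_def by simp

lemma Indp_single: "Indp {i} u = (norm (u i))\<^sup>2"
proof -
  have "Indp {i} u = avg (RS {i}) (\<lambda>\<eta>. (norm (u i))\<^sup>2)"
    unfolding Indp_def by (intro avg_cong) (simp add: RS_abs)
  also have "\<dots> = (norm (u i))\<^sup>2" by (simp add: avg_const finite_RS RS_ne)
  finally show ?thesis .
qed

lemma Td0: "Td 0 n \<Omega> y = Ind \<Omega> (idx 0 n) y"
  unfolding Td_def Ind_def idx0 signs0 Indp_single by (simp add: Wal_def avg_def)

lemma claim:
  fixes y :: "nat list \<Rightarrow> (nat \<Rightarrow> real) list \<Rightarrow> 'b::real_normed_vector"
  assumes E1: "\<And>n d (v :: nat \<Rightarrow> nat list \<Rightarrow> 'b). Indp ({..<n} \<times> idx d n) (\<lambda>p. v (fst p) (snd p)) \<le> K * T2p {..<n} (idx d n) v"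
    and E2: "\<And>n d (v :: nat \<Rightarrow> nat list \<Rightarrow> 'b). T2p {..<n} (idx d n) v \<le> K * Indp ({..<n} \<times> idx d n) (\<lambda>p. v (fst p) (snd p))"
    and K: "0 \<le> K" and \<Omega>: "finite \<Omega>"
  shows "Td d n \<Omega> y \<le> K ^ d * Ind \<Omega> (idx d n) y \<and> Ind \<Omega> (idx d n) y \<le> K ^ d * Td d n \<Omega> y"
  using \<Omega>
proof (induction d arbitrary: \<Omega> y)
  case 0
  then show ?case by (simp add: Td0)
next
  case (Suc d)
  have fO: "finite (Om \<Omega> n)" using finite_Om Suc.prems .
  have IH1: "Td d n (Om \<Omega> n) (zz n y) \<le> K ^ d * Ind (Om \<Omega> n) (idx d n) (zz n y)"
    and IH2: "Ind (Om \<Omega> n) (idx d n) (zz n y) \<le> K ^ d * Td d n (Om \<Omega> n) (zz n y)"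
    using Suc.IH[OF fO, of "zz n y"] by auto
  have A: "Ind \<Omega> (idx (Suc d) n) y = avg \<Omega> (\<lambda>\<omega>. Indp ({..<n} \<times> idx d n) (\<lambda>p. (\<lambda>i r. y (r @ [i]) \<omega>) (fst p) (snd p)))"
    unfolding Ind_def by (simp add: Indp_Suc)
  have B: "Ind (Om \<Omega> n) (idx d n) (zz n y) = avg \<Omega> (\<lambda>\<omega>. T2p {..<n} (idx d n) (\<lambda>i r. y (r @ [i]) \<omega>))"
    by (rule Ind_Om[OF Suc.prems])
  have Kd: "0 \<le> K ^ d" using K by simp
  have "Td (Suc d) n \<Omega> y = Td d n (Om \<Omega> n) (zz n y)" by (rule Td_Suc[OF Suc.prems])
  also have "\<dots> \<le> K ^ d * avg \<Omega> (\<lambda>\<omega>. T2p {..<n} (idx d n) (\<lambda>i r. y (r @ [i]) \<omega>))"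
    using IH1 B by simp
  also have "\<dots> \<le> K ^ d * avg \<Omega> (\<lambda>\<omega>. K * Indp ({..<n} \<times> idx d n) (\<lambda>p. (\<lambda>i r. y (r @ [i]) \<omega>) (fst p) (snd p)))"
    using Kd by (intro mult_left_mono avg_mono E2) auto
  also have "\<dots> = K ^ Suc d * Ind \<Omega> (idx (Suc d) n) y"
    unfolding A avg_cmult by simp
  finally have 1: "Td (Suc d) n \<Omega> y \<le> K ^ Suc d * Ind \<Omega> (idx (Suc d) n) y" .
  have "Ind \<Omega> (idx (Suc d) n) y \<le> avg \<Omega> (\<lambda>\<omega>. K * T2p {..<n} (idx d n) (\<lambda>i r. y (r @ [i]) \<omega>))"
    unfolding A by (intro avg_mono E1)
  also have "\<dots> = K * Ind (Om \<Omega> n) (idx d n) (zz n y)"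
    unfolding B avg_cmult ..
  also have "\<dots> \<le> K * (K ^ d * Td d n (Om \<Omega> n) (zz n y))"
    using K IH2 by (intro mult_left_mono) auto
  also have "\<dots> = K ^ Suc d * Td (Suc d) n \<Omega> y"
    unfolding Td_Suc[OF Suc.prems] by (simp add: mult.assoc)
  finally show ?case using 1 by simp
qed

lemma T2p_single: "T2p I {j} w = Indp I (\<lambda>i. w i j)"
proof -
  have "T2p I {j} w = avg (RS I) (\<lambda>\<epsilon>. avg (RS {j}) (\<lambda>\<delta>. (norm (\<Sum>i\<in>I. \<epsilon> i *\<^sub>R w i j))\<^sup>2))"
    unfolding T2p_def
  proof (intro avg_cong)
    fix \<epsilon> \<delta> assume d: "\<delta> \<in> RS {j}"
    have "(\<Sum>i\<in>I. (\<epsilon> i * \<delta> j) *\<^sub>R w i j) = \<delta> j *\<^sub>R (\<Sum>i\<in>I. \<epsilon> i *\<^sub>R w i j)"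
      by (simp add: scaleR_sum_right mult.commute)
    then show "(norm (\<Sum>i\<in>I. \<Sum>j\<in>{j}. (\<epsilon> i * \<delta> j) *\<^sub>R w i j))\<^sup>2 = (norm (\<Sum>i\<in>I. \<epsilon> i *\<^sub>R w i j))\<^sup>2"
      using RS_abs[OF d] by simp
  qed
  also have "\<dots> = Indp I (\<lambda>i. w i j)"
    unfolding Indp_def by (simp add: avg_const finite_RS RS_ne)
  finally show ?thesis .
qed

lemma Td_Nd: "Td d n {[]} (\<lambda>l \<omega>. x l) = (Nd d n x)\<^sup>2"
  unfolding Td_def Nd_sq Wal_def by (simp add: avg_def)

lemma Nd_nonneg: "0 \<le> Nd d n x"
  unfolding Nd_def by (intro real_sqrt_ge_zero divide_nonneg_nonneg sum_nonneg) auto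

lemma G:
  fixes sc :: "complex \<Rightarrow> 'b::real_normed_vector \<Rightarrow> 'b"
  assumes alpha: "property_alpha sc" and scr: "\<And>r w. sc (complex_of_real r) w = r *\<^sub>R w"
  shows "\<exists>K>0. \<forall>n (a :: nat list \<Rightarrow> complex) (x :: nat list \<Rightarrow> 'b).
           Nd d n (\<lambda>l. sc (a l) (x l)) \<le> K * (MAX l\<in>idx d n. cmod (a l)) * Nd d n x"
proof -
  obtain C where C: "\<And>n (a :: nat list \<Rightarrow> complex) (x :: nat list \<Rightarrow> 'b).
      Nd 2 n (\<lambda>is. sc (a is) (x is)) \<le> C * (MAX is\<in>idx 2 n. cmod (a is)) * Nd 2 n x"
    using alpha unfolding property_alpha_def by blast
  have sc0: "sc 0 w = 0" for w using scr[of 0 w] by simp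
  have lift: "T2p I J (\<lambda>i j. sc (a i j) (v i j)) \<le> C\<^sup>2 * M\<^sup>2 * T2p I J v"
    if "finite I" "finite J" "\<And>i j. i \<in> I \<Longrightarrow> j \<in> J \<Longrightarrow> cmod (a i j) \<le> M" "0 \<le> M"
    for I :: "'i::countable set" and J :: "'j::countable set" and a v M
    by (rule alpha_lift_pointwise[OF C sc0 that])
  have E: "T2p I J (\<lambda>i j. \<sigma> (i, j) *\<^sub>R w i j) \<le> C\<^sup>2 * T2p I J w"
    if "finite I" "finite J" "\<sigma> \<in> RS (I \<times> J)"
    for I :: "nat set" and J :: "nat list set" and w :: "nat \<Rightarrow> nat list \<Rightarrow> 'b" and \<sigma>
  proof -
    have "T2p I J (\<lambda>i j. sc (complex_of_real (\<sigma> (i, j))) (w i j)) \<le> C\<^sup>2 * 1\<^sup>2 * T2p I J w"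
      using that RS_abs[OF that(3)] by (intro lift) auto
    then show ?thesis by (simp add: scr)
  qed
  define K where "K = C\<^sup>2"
  have K0: "0 \<le> K" unfolding K_def by simp
  have E1: "Indp ({..<n} \<times> idx d n) (\<lambda>p. v (fst p) (snd p)) \<le> K * T2p {..<n} (idx d n) v"
    and E2: "T2p {..<n} (idx d n) v \<le> K * Indp ({..<n} \<times> idx d n) (\<lambda>p. v (fst p) (snd p))"
    for n d and v :: "nat \<Rightarrow> nat list \<Rightarrow> 'b"
  proof -
    have lift': "T2p {..<n} (idx d n) (\<lambda>i j. \<sigma> (i, j) *\<^sub>R w i j) \<le> K * T2p {..<n} (idx d n) w"
      if "\<sigma> \<in> RS ({..<n} \<times> idx d n)" for w :: "nat \<Rightarrow> nat list \<Rightarrow> 'b" and \<sigma>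
      unfolding K_def by (rule E) (simp_all add: finite_idx that)
    show "Indp ({..<n} \<times> idx d n) (\<lambda>p. v (fst p) (snd p)) \<le> K * T2p {..<n} (idx d n) v"
      by (rule E_pointwise(1)[OF finite_lessThan finite_idx lift'])
    show "T2p {..<n} (idx d n) v \<le> K * Indp ({..<n} \<times> idx d n) (\<lambda>p. v (fst p) (snd p))"
      by (rule E_pointwise(2)[OF finite_lessThan finite_idx lift'])
  qed
  define Kd where "Kd = K ^ d"
  have Kd0: "0 \<le> Kd" unfolding Kd_def using K0 by simp
  have main: "Nd d n (\<lambda>l. sc (a l) (x l)) \<le> Kd * \<bar>C\<bar> * M * Nd d n x"
    if aM: "\<And>l. l \<in> idx d n \<Longrightarrow> cmod (a l) \<le> M" and M0: "0 \<le> M" for n a x M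
  proof -
    have cl: "Td d n {[] :: (nat \<Rightarrow> real) list} y \<le> Kd * Ind {[] :: (nat \<Rightarrow> real) list} (idx d n) y \<and> Ind {[] :: (nat \<Rightarrow> real) list} (idx d n) y \<le> Kd * Td d n {[] :: (nat \<Rightarrow> real) list} y"
      for y :: "nat list \<Rightarrow> (nat \<Rightarrow> real) list \<Rightarrow> 'b"
      unfolding Kd_def by (rule claim[OF E1 E2 K0]) simp
    have one: "Indp (idx d n) (\<lambda>l. sc (a l) (x l)) \<le> C\<^sup>2 * M\<^sup>2 * Indp (idx d n) x"
    proof -
      have "T2p (idx d n) {0::nat} (\<lambda>i j. sc (a i) (x i)) \<le> C\<^sup>2 * M\<^sup>2 * T2p (idx d n) {0::nat} (\<lambda>i j. x i)"
        using aM M0 by (intro lift) (auto simp: finite_idx)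
      then show ?thesis by (simp add: T2p_single)
    qed
    have "(Nd d n (\<lambda>l. sc (a l) (x l)))\<^sup>2 = Td d n {[] :: (nat \<Rightarrow> real) list} (\<lambda>l \<omega>. sc (a l) (x l))"
      by (simp add: Td_Nd)
    also have "\<dots> \<le> Kd * Ind {[] :: (nat \<Rightarrow> real) list} (idx d n) (\<lambda>l \<omega>. sc (a l) (x l))"
      using cl by blast
    also have "\<dots> \<le> Kd * (C\<^sup>2 * M\<^sup>2 * Ind {[] :: (nat \<Rightarrow> real) list} (idx d n) (\<lambda>l \<omega>. x l))"
      using one Kd0 by (intro mult_left_mono) (auto simp: Ind_def avg_def)
    also have "\<dots> \<le> Kd * (C\<^sup>2 * M\<^sup>2 * (Kd * Td d n {[] :: (nat \<Rightarrow> real) list} (\<lambda>l \<omega>. x l)))"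
      using cl Kd0 by (intro mult_left_mono) auto
    also have "\<dots> = (Kd * \<bar>C\<bar> * M * Nd d n x)\<^sup>2"
      unfolding Td_Nd power_mult_distrib power2_abs by (simp only: power2_eq_square mult_ac)
    finally have "(Nd d n (\<lambda>l. sc (a l) (x l)))\<^sup>2 \<le> (Kd * \<bar>C\<bar> * M * Nd d n x)\<^sup>2" .
    moreover have "0 \<le> Kd * \<bar>C\<bar> * M * Nd d n x"
      using Kd0 M0 Nd_nonneg[of d n x] by (intro mult_nonneg_nonneg) auto
    ultimately show ?thesis
      by (rule power2_le_imp_le)
  qed
  show ?thesis
  proof (intro exI[where x="Kd * \<bar>C\<bar> + 1"] conjI allI)
    show "0 < Kd * \<bar>C\<bar> + 1" using Kd0 by (simp add: add_nonneg_pos)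
    fix n and a :: "nat list \<Rightarrow> complex" and x :: "nat list \<Rightarrow> 'b"
    show "Nd d n (\<lambda>l. sc (a l) (x l)) \<le> (Kd * \<bar>C\<bar> + 1) * (MAX l\<in>idx d n. cmod (a l)) * Nd d n x"
    proof (cases "idx d n = {}")
      case True
      then show ?thesis by (simp add: Nd_def)
    next
      case False
      define M where "M = (MAX l\<in>idx d n. cmod (a l))"
      have aM: "\<And>l. l \<in> idx d n \<Longrightarrow> cmod (a l) \<le> M"
        unfolding M_def using finite_idx by (intro Max_ge) auto
      have M0: "0 \<le> M" using False aM norm_ge_zero order_trans by blast
      have "Nd d n (\<lambda>l. sc (a l) (x l)) \<le> Kd * \<bar>C\<bar> * M * Nd d n x"
        by (rule main[OF aM M0])
      also have "\<dots> \<le> (Kd * \<bar>C\<bar> + 1) * M * Nd d n x"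
        using M0 Nd_nonneg[of d n x] by (intro mult_right_mono) auto
      finally show ?thesis unfolding M_def .
    qed
  qed
qed



lemma cs_linear: "complex_structure J \<Longrightarrow> linear J"
  unfolding complex_structure_def by blast

lemma cs_JJ: "complex_structure J \<Longrightarrow> J (J x) = - x"
  unfolding complex_structure_def by blast

lemma cs_norm: "complex_structure J \<Longrightarrow> norm (J x) = norm x"
  unfolding complex_structure_def using cos_pi_half sin_pi_half
  by (metis (no_types, lifting) scaleR_one scaleR_zero_left add_0)

lemma cs_bl: "complex_structure J \<Longrightarrow> bounded_linear J"
  by (rule bounded_linear_intro[where K=1])
     (auto simp: cs_norm real_vector.linear_add[OF cs_linear] linear_cmul[OF cs_linear])

lemma dualJ_apply: "complex_structure J \<Longrightarrow> blinfun_apply (dualJ J g) x = g (J x)"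
  unfolding dualJ_def
  by (subst bounded_linear_Blinfun_apply) (auto intro: bounded_linear_compose[OF blinfun.bounded_linear_right cs_bl])

lemma cpair_alt: "cpair J g x = complex_of_real (g x) - \<i> * complex_of_real (g (J x))"
  unfolding cpair_def by (simp add: Complex_eq)

lemma cpair_scC:
  assumes "complex_structure J"
  shows "cpair J g (scC J c x) = c * cpair J g x"
proof -
  have l: "linear J" by (rule cs_linear[OF assms])
  have "J (scC J c x) = Re c *\<^sub>R J x - Im c *\<^sub>R x"
    unfolding scC_def by (simp add: real_vector.linear_add[OF l] linear_cmul[OF l] cs_JJ[OF assms])
  then show ?thesis
    unfolding cpair_def scC_def
    by (simp add: blinfun.add_right blinfun.scaleR_right blinfun.diff_right complex_eq_iff)
qed

lemma cpair_scC_dual: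
  assumes "complex_structure J"
  shows "cpair J (scC (dualJ J) c g) x = c * cpair J g x"
  unfolding cpair_def scC_def
  by (simp add: blinfun.add_left blinfun.scaleR_left dualJ_apply[OF assms] cs_JJ[OF assms]
      blinfun.minus_right complex_eq_iff)

lemma cpair_bound:
  assumes "complex_structure J"
  shows "cmod (cpair J g x) \<le> norm g * norm x"
proof (cases "cpair J g x = 0")
  case True
  then show ?thesis by simp
next
  case False
  define z where "z = cpair J g x"
  have zpos: "0 < cmod z" using False z_def by simp
  have "(Re z / cmod z)\<^sup>2 + (- Im z / cmod z)\<^sup>2 = 1"
  proof -
    have "(cmod z)\<^sup>2 \<noteq> 0" using zpos by simp
    then have nz: "(Im z)\<^sup>2 + (Re z)\<^sup>2 \<noteq> 0" "(Re z)\<^sup>2 + (Im z)\<^sup>2 \<noteq> 0" by (simp_all add: cmod_power2 add.commute)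
    have "(Re z / cmod z)\<^sup>2 + (- Im z / cmod z)\<^sup>2 = ((Re z)\<^sup>2 + (Im z)\<^sup>2) / (cmod z)\<^sup>2"
      by (simp add: power_divide add_divide_distrib)
    also have "\<dots> = 1" using nz by (simp add: cmod_power2)
    finally show ?thesis .
  qed
  then obtain t where ct: "Re z / cmod z = cos t" and st: "- Im z / cmod z = sin t"
    using sincos_total_2pi by metis
  have l: "linear J" by (rule cs_linear[OF assms])
  have "g (cos t *\<^sub>R x + sin t *\<^sub>R J x) = cos t * g x + sin t * g (J x)"
    by (simp add: blinfun.add_right blinfun.scaleR_right)
  also have "\<dots> = (Re z / cmod z) * Re z + (- Im z / cmod z) * (- Im z)"
    using ct st by (simp add: z_def cpair_def)
  also have "\<dots> = (Re z * Re z + Im z * Im z) / cmod z"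
    by (simp add: add_divide_distrib)
  also have "\<dots> = cmod z"
  proof -
    have "Re z * Re z + Im z * Im z = cmod z * cmod z"
      using cmod_power2[of z] by (simp add: power2_eq_square)
    then show ?thesis using zpos by simp
  qed
  finally have eq: "g (cos t *\<^sub>R x + sin t *\<^sub>R J x) = cmod z" .
  have "g (cos t *\<^sub>R x + sin t *\<^sub>R J x) \<le> norm g * norm (cos t *\<^sub>R x + sin t *\<^sub>R J x)"
    using norm_blinfun[of g "cos t *\<^sub>R x + sin t *\<^sub>R J x"] by simp
  also have "norm (cos t *\<^sub>R x + sin t *\<^sub>R J x) = norm x"
    using assms unfolding complex_structure_def by blast
  finally show ?thesis using eq z_def by simp
qed

lemma cpair_sum_left:
  "cpair J (\<Sum>m\<in>S. c m *\<^sub>R g m) x = (\<Sum>m\<in>S. complex_of_real (c m) * cpair J (g m) x)"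
  unfolding cpair_alt
  by (simp add: blinfun.sum_left blinfun.scaleR_left sum_subtractf sum_distrib_left algebra_simps)

lemma cpair_sum_right:
  assumes "complex_structure J"
  shows "cpair J g (\<Sum>l\<in>S. b l *\<^sub>R X l) = (\<Sum>l\<in>S. complex_of_real (b l) * cpair J g (X l))"
proof -
  have l: "linear J" by (rule cs_linear[OF assms])
  show ?thesis
    unfolding cpair_alt
    by (simp add: real_vector.linear_sum[OF l] linear_cmul[OF l] blinfun.sum_right blinfun.scaleR_right
        sum_subtractf sum_distrib_left algebra_simps)
qed



lemma signs_val: "\<epsilon> \<in> signs d n \<Longrightarrow> k < d \<Longrightarrow> i < n \<Longrightarrow> \<epsilon> k i = -1 \<or> \<epsilon> k i = 1"
  unfolding signs_RS using RS_val by (fastforce simp: PiE_iff)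

lemma idx_nth: "l \<in> idx d n \<Longrightarrow> k < d \<Longrightarrow> l ! k < n"
  unfolding idx_def using nth_mem by fastforce

lemma Wal_sq: "\<epsilon> \<in> signs d n \<Longrightarrow> l \<in> idx d n \<Longrightarrow> Wal d \<epsilon> l * Wal d \<epsilon> l = 1"
  unfolding Wal_def prod.distrib[symmetric]
  by (intro prod.neutral ballI) (use signs_val idx_nth in fastforce)

lemma signs_ne: "signs d n \<noteq> {}"
  unfolding signs_RS using RS_ne[of "{..<n}"] by (simp add: PiE_eq_empty_iff)

lemma card_signs_pos: "0 < card (signs d n)"
  using signs_ne finite_signs by (simp add: card_gt_0_iff)

lemma Wal_orth:
  assumes l: "l \<in> idx d n" and m: "m \<in> idx d n" and ne: "l \<noteq> m"
  shows "(\<Sum>\<epsilon>\<in>signs d n. Wal d \<epsilon> l * Wal d \<epsilon> m) = 0"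
proof -
  have len: "length l = d" "length m = d" using l m by (auto simp: idx_def)
  obtain k where k: "k < d" "l ! k \<noteq> m ! k"
    using ne len nth_equalityI by metis
  define \<phi> where "\<phi> \<epsilon> = \<epsilon>(k := (\<epsilon> k)(l ! k := - \<epsilon> k (l ! k)))" for \<epsilon> :: "nat \<Rightarrow> nat \<Rightarrow> real"
  have lk: "l ! k < n" using idx_nth[OF l k(1)] .
  have \<phi>S: "\<phi> \<epsilon> \<in> signs d n" if e: "\<epsilon> \<in> signs d n" for \<epsilon>
  proof -
    have ek: "\<epsilon> k \<in> RS {..<n}" using e k(1) unfolding signs_RS by auto
    have "(\<epsilon> k)(l ! k := - \<epsilon> k (l ! k)) \<in> RS {..<n}"
      using ek lk RS_val[OF ek, of "l ! k"] unfolding RS_def by (auto simp: PiE_iff extensional_def)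
    then show ?thesis using e k(1) unfolding signs_RS \<phi>_def by (auto simp: PiE_iff extensional_def)
  qed
  have \<phi>\<phi>: "\<phi> (\<phi> \<epsilon>) = \<epsilon>" for \<epsilon>
    unfolding \<phi>_def by (auto simp: fun_eq_iff)
  have bij: "bij_betw \<phi> (signs d n) (signs d n)"
    by (rule bij_betwI[where g=\<phi>]) (auto simp: \<phi>S \<phi>\<phi>)
  have split: "Wal d \<epsilon> r = \<epsilon> k (r ! k) * (\<Prod>k'\<in>{..<d} - {k}. \<epsilon> k' (r ! k'))" for \<epsilon> r
    unfolding Wal_def using k(1) by (subst prod.remove[of "{..<d}" k]) auto
  have rest: "(\<Prod>k'\<in>{..<d} - {k}. \<phi> \<epsilon> k' (r ! k')) = (\<Prod>k'\<in>{..<d} - {k}. \<epsilon> k' (r ! k'))" for \<epsilon> r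
    unfolding \<phi>_def by (intro prod.cong) auto
  have Wl: "Wal d (\<phi> \<epsilon>) l = - Wal d \<epsilon> l" for \<epsilon>
    unfolding split[of "\<phi> \<epsilon>"] split[of \<epsilon>] rest by (simp add: \<phi>_def)
  have Wm: "Wal d (\<phi> \<epsilon>) m = Wal d \<epsilon> m" for \<epsilon>
    unfolding split[of "\<phi> \<epsilon>"] split[of \<epsilon>] rest using k(2) by (simp add: \<phi>_def)
  have "(\<Sum>\<epsilon>\<in>signs d n. Wal d \<epsilon> l * Wal d \<epsilon> m) = (\<Sum>\<epsilon>\<in>signs d n. Wal d (\<phi> \<epsilon>) l * Wal d (\<phi> \<epsilon>) m)"
    by (rule sum.reindex_bij_betw[OF bij, symmetric])
  also have "\<dots> = - (\<Sum>\<epsilon>\<in>signs d n. Wal d \<epsilon> l * Wal d \<epsilon> m)"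
    by (simp add: Wl Wm sum_negf)
  finally show ?thesis by simp
qed

lemma sum_Wal_Wal:
  assumes "l \<in> idx d n" "m \<in> idx d n"
  shows "(\<Sum>\<epsilon>\<in>signs d n. Wal d \<epsilon> m * Wal d \<epsilon> l) = (if m = l then real (card (signs d n)) else 0)"
proof (cases "m = l")
  case True
  then show ?thesis using Wal_sq assms by simp
next
  case False
  then show ?thesis using Wal_orth[OF assms(2) assms(1)] by simp
qed

lemma sum_CS:
  assumes "\<And>s. 0 \<le> f s" "\<And>s. 0 \<le> g s"
  shows "(\<Sum>s\<in>S. f s * g s) \<le> sqrt (\<Sum>s\<in>S. (f s)\<^sup>2) * sqrt (\<Sum>s\<in>S. (g s)\<^sup>2)"
  using L2_set_mult_ineq[where A=S and f=f and g=g] assms unfolding L2_set_def by simp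

lemma Nd_Wal: "Nd d n x = sqrt ((\<Sum>\<epsilon>\<in>signs d n. (norm (\<Sum>l\<in>idx d n. Wal d \<epsilon> l *\<^sub>R x l))\<^sup>2) / real (card (signs d n)))"
  unfolding Nd_def Wal_def ..

lemma pair_identity:
  assumes cs: "complex_structure J"
  shows "(\<Sum>\<epsilon>\<in>signs d n. cpair J (\<Sum>m\<in>idx d n. Wal d \<epsilon> m *\<^sub>R G m) (\<Sum>l\<in>idx d n. Wal d \<epsilon> l *\<^sub>R X l))
       = complex_of_real (real (card (signs d n))) * (\<Sum>l\<in>idx d n. cpair J (G l) (X l))"
proof -
  let ?S = "signs d n" and ?I = "idx d n"
  have "(\<Sum>\<epsilon>\<in>?S. cpair J (\<Sum>m\<in>?I. Wal d \<epsilon> m *\<^sub>R G m) (\<Sum>l\<in>?I. Wal d \<epsilon> l *\<^sub>R X l))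
      = (\<Sum>\<epsilon>\<in>?S. \<Sum>m\<in>?I. \<Sum>l\<in>?I. complex_of_real (Wal d \<epsilon> m * Wal d \<epsilon> l) * cpair J (G m) (X l))"
    by (simp add: cpair_sum_left cpair_sum_right[OF cs] sum_distrib_left mult.assoc)
  also have "\<dots> = (\<Sum>m\<in>?I. \<Sum>l\<in>?I. \<Sum>\<epsilon>\<in>?S. complex_of_real (Wal d \<epsilon> m * Wal d \<epsilon> l) * cpair J (G m) (X l))"
    by (subst sum.swap) (simp add: sum.swap[of _ ?S])
  also have "\<dots> = (\<Sum>m\<in>?I. \<Sum>l\<in>?I. complex_of_real (\<Sum>\<epsilon>\<in>?S. Wal d \<epsilon> m * Wal d \<epsilon> l) * cpair J (G m) (X l))"
    by (simp add: sum_distrib_right)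
  also have "\<dots> = (\<Sum>m\<in>?I. \<Sum>l\<in>?I. (if m = l then complex_of_real (real (card ?S)) * cpair J (G m) (X l) else 0))"
    by (intro sum.cong refl) (simp add: sum_Wal_Wal)
  also have "\<dots> = (\<Sum>m\<in>?I. complex_of_real (real (card ?S)) * cpair J (G m) (X m))"
    by (simp add: finite_idx)
  also have "\<dots> = complex_of_real (real (card ?S)) * (\<Sum>l\<in>?I. cpair J (G l) (X l))"
    by (simp add: sum_distrib_left)
  finally show ?thesis .
qed

lemma pair_bound:
  assumes cs: "complex_structure J"
  shows "cmod (\<Sum>l\<in>idx d n. cpair J (G l) (X l)) \<le> Nd d n G * Nd d n X"
proof -
  let ?S = "signs d n" and ?I = "idx d n"
  define c where "c = real (card ?S)"
  have c0: "0 < c" unfolding c_def using card_signs_pos by simp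
  define YG where "YG \<epsilon> = (\<Sum>m\<in>?I. Wal d \<epsilon> m *\<^sub>R G m)" for \<epsilon>
  define YX where "YX \<epsilon> = (\<Sum>m\<in>?I. Wal d \<epsilon> m *\<^sub>R X m)" for \<epsilon>
  have id: "(\<Sum>\<epsilon>\<in>?S. cpair J (YG \<epsilon>) (YX \<epsilon>)) = complex_of_real c * (\<Sum>l\<in>?I. cpair J (G l) (X l))"
    unfolding YG_def YX_def c_def by (rule pair_identity[OF cs])
  have "c * cmod (\<Sum>l\<in>?I. cpair J (G l) (X l)) = cmod (\<Sum>\<epsilon>\<in>?S. cpair J (YG \<epsilon>) (YX \<epsilon>))"
    unfolding id norm_mult using c0 by simp
  also have "\<dots> \<le> (\<Sum>\<epsilon>\<in>?S. cmod (cpair J (YG \<epsilon>) (YX \<epsilon>)))"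
    by (rule norm_sum)
  also have "\<dots> \<le> (\<Sum>\<epsilon>\<in>?S. norm (YG \<epsilon>) * norm (YX \<epsilon>))"
    by (intro sum_mono cpair_bound[OF cs])
  also have "\<dots> \<le> sqrt (\<Sum>\<epsilon>\<in>?S. (norm (YG \<epsilon>))\<^sup>2) * sqrt (\<Sum>\<epsilon>\<in>?S. (norm (YX \<epsilon>))\<^sup>2)"
    by (rule sum_CS) auto
  also have "\<dots> = c * (Nd d n G * Nd d n X)"
  proof -
    have "Nd d n G * Nd d n X = sqrt (\<Sum>\<epsilon>\<in>?S. (norm (YG \<epsilon>))\<^sup>2) * sqrt (\<Sum>\<epsilon>\<in>?S. (norm (YX \<epsilon>))\<^sup>2) / (sqrt c * sqrt c)"
      unfolding Nd_Wal YG_def YX_def c_def[symmetric] by (simp add: real_sqrt_divide)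
    also have "sqrt c * sqrt c = c" using c0 by simp
    finally show ?thesis using c0 by simp
  qed
  finally show ?thesis using c0 by (simp add: mult_le_cancel_left_pos)
qed

theorem proposition3p4:
  fixes J :: "'a::banach \<Rightarrow> 'a" and d :: nat
  assumes "complex_structure J"
    and "property_alpha (scC J) \<or> property_alpha (scC (dualJ J))"
    and "d \<ge> 2"
  shows "property_A J d"
  using assms(2)
proof
  assume al: "property_alpha (scC J)"
  have scr: "scC J (complex_of_real r) w = r *\<^sub>R w" for r w by (simp add: scC_def)
  obtain K where K: "K > 0" and HK: "\<And>n (a :: nat list \<Rightarrow> complex) (x :: nat list \<Rightarrow> 'a).
      Nd d n (\<lambda>l. scC J (a l) (x l)) \<le> K * (MAX l\<in>idx d n. cmod (a l)) * Nd d n x"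
    using G[OF al scr, of d] by blast
  show "property_A J d"
    unfolding property_A_def
  proof (intro exI[where x=K] conjI allI)
    show "0 < K" by (rule K)
    fix n and a :: "nat list \<Rightarrow> complex" and x :: "nat list \<Rightarrow> 'a" and xs :: "nat list \<Rightarrow> 'a \<Rightarrow>\<^sub>L real"
    have "(\<Sum>l\<in>idx d n. a l * cpair J (xs l) (x l)) = (\<Sum>l\<in>idx d n. cpair J (xs l) (scC J (a l) (x l)))"
      by (simp add: cpair_scC[OF assms(1)])
    then have "cmod (\<Sum>l\<in>idx d n. a l * cpair J (xs l) (x l)) \<le> Nd d n xs * Nd d n (\<lambda>l. scC J (a l) (x l))"
      using pair_bound[OF assms(1)] by simp
    also have "\<dots> \<le> Nd d n xs * (K * (MAX l\<in>idx d n. cmod (a l)) * Nd d n x)"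
      by (intro mult_left_mono HK Nd_nonneg)
    finally show "cmod (\<Sum>l\<in>idx d n. a l * cpair J (xs l) (x l))
        \<le> K * (MAX l\<in>idx d n. cmod (a l)) * Nd d n x * Nd d n xs"
      by (simp add: mult_ac)
  qed
next
  assume al: "property_alpha (scC (dualJ J))"
  have scr: "scC (dualJ J) (complex_of_real r) w = r *\<^sub>R w" for r w by (simp add: scC_def)
  obtain K where K: "K > 0" and HK: "\<And>n (a :: nat list \<Rightarrow> complex) (x :: nat list \<Rightarrow> 'a \<Rightarrow>\<^sub>L real).
      Nd d n (\<lambda>l. scC (dualJ J) (a l) (x l)) \<le> K * (MAX l\<in>idx d n. cmod (a l)) * Nd d n x"
    using G[OF al scr, of d] by blast
  show "property_A J d"
    unfolding property_A_def
  proof (intro exI[where x=K] conjI allI)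
    show "0 < K" by (rule K)
    fix n and a :: "nat list \<Rightarrow> complex" and x :: "nat list \<Rightarrow> 'a" and xs :: "nat list \<Rightarrow> 'a \<Rightarrow>\<^sub>L real"
    have "(\<Sum>l\<in>idx d n. a l * cpair J (xs l) (x l)) = (\<Sum>l\<in>idx d n. cpair J (scC (dualJ J) (a l) (xs l)) (x l))"
      by (simp add: cpair_scC_dual[OF assms(1)])
    then have "cmod (\<Sum>l\<in>idx d n. a l * cpair J (xs l) (x l)) \<le> Nd d n (\<lambda>l. scC (dualJ J) (a l) (xs l)) * Nd d n x"
      using pair_bound[OF assms(1)] by simp
    also have "\<dots> \<le> (K * (MAX l\<in>idx d n. cmod (a l)) * Nd d n xs) * Nd d n x"
      by (intro mult_right_mono HK Nd_nonneg)
    finally show "cmod (\<Sum>l\<in>idx d n. a l * cpair J (xs l) (x l))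
        \<le> K * (MAX l\<in>idx d n. cmod (a l)) * Nd d n x * Nd d n xs"
      by (simp add: mult_ac)
  qed
qed

end
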